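(* Let $n=p_1^{m_1}\cdots p_k^{m_k}$. The Laplacian spectrum of $\mathcal E_{\mathbb Z_n}(\mathscr U)$ consists of $N_I$ with multiplicity $\prod_{i\notin\Xi_I}m_i-1$ for each $I\in V(\mathscr G)$ with $|[I]|>1$, together with the eigenvalues of the vertex-weighted Laplacian matrix $\mathbf L(\mathscr G)$.
   Context: Primes $p_1<\dots<p_k$, positive integers $m_i$, $n$ not prime. Nonzero proper ideals of $\mathbb Z_n$ are uniquely $\langle p_1^{r_1}\cdots p_k^{r_k}\rangle$, $0\le r_i\le m_i$, $(r_i)\ne(0,\dots,0),(m_1,\dots,m_k)$; essential iff $r_j\ne m_j$ for all $j$. Essential ideal graph $\mathcal E_{\mathbb Z_n}$: vertices nonzero proper ideals, distinct $I,K$ adjacent iff $I+K$ essential. $\mathscr U$ = nonzero proper nonessential ideals, $\mathcal E_{\mathbb Z_n}(\mathscr U)$ the induced subgraph; $\Xi_I=\{i:r_i=m_i\}$, $[I]=\{J\in\mathscr U:\Xi_J=\Xi_I\}$. $\mathscr G$: vertex set the $2^k-2$ ideals $\langle\prod_{i\in S}p_i^{m_i}\rangle$, $S$ nonempty proper subset of $\{1,\dots,k\}$, $I\sim J$ iff $\Xi_I\cap\Xi_J=\emptyset$. $n_I=|[I]|=\prod_{i\notin\Xi_I}m_i$, $N_I=\sum_{J\sim I}n_J$. $\mathbf L(\mathscr G)$: matrix indexed by $V(\mathscr G)$ with diagonal entries $N_I$, $(I,J)$-entry $-n_J$ if $I\ne J$, $I\sim J$, and $0$ otherwise. *)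

theory Defs
  imports "HOL-Computational_Algebra.Computational_Algebra" "Jordan_Normal_Form.Char_Poly"
begin

text \<open>Ideals of Z_n are modelled by their canonical generators: the ideal generated by
  a positive divisor d of n.  This is a bijection between positive divisors of n and
  ideals of Z_n; the zero ideal corresponds to d = n, the whole ring to d = 1.
  Under it, the sum of ideals is the ideal of gcd d e and the intersection is the
  ideal of lcm d e.\<close>

definition nzp_ideals :: "nat \<Rightarrow> nat set" where
  "nzp_ideals n = {d. d dvd n \<and> d \<noteq> 1 \<and> d \<noteq> n}"

text \<open>Essential ideal: meets every nonzero ideal nontrivially
  (the ideal of d meets the ideal of e in the ideal of lcm d e).\<close>
definition essential_ideal :: "nat \<Rightarrow> nat \<Rightarrow> bool" where
  "essential_ideal n d \<longleftrightarrow> (\<forall>e. e dvd n \<and> e \<noteq> n \<longrightarrow> lcm d e \<noteq> n)"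

definition ess_adj :: "nat \<Rightarrow> nat \<Rightarrow> nat \<Rightarrow> bool" where
  "ess_adj n d e \<longleftrightarrow> d \<noteq> e \<and> essential_ideal n (gcd d e)"

definition noness_ideals :: "nat \<Rightarrow> nat set" where
  "noness_ideals n = {d \<in> nzp_ideals n. \<not> essential_ideal n d}"

definition Xi :: "nat \<Rightarrow> nat \<Rightarrow> nat set" where
  "Xi n d = {p \<in> prime_factors n. multiplicity p d = multiplicity p n}"

definition ideal_class :: "nat \<Rightarrow> nat \<Rightarrow> nat set" where
  "ideal_class n d = {e \<in> noness_ideals n. Xi n e = Xi n d}"

definition class_size :: "nat \<Rightarrow> nat \<Rightarrow> nat" where
  "class_size n d = card (ideal_class n d)"

definition G_vertices :: "nat \<Rightarrow> nat set" where
  "G_vertices n = {(\<Prod>p\<in>S. p ^ multiplicity p n) | S.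
                     S \<subseteq> prime_factors n \<and> S \<noteq> {} \<and> S \<noteq> prime_factors n}"

definition G_adj :: "nat \<Rightarrow> nat \<Rightarrow> nat \<Rightarrow> bool" where
  "G_adj n d e \<longleftrightarrow> Xi n d \<inter> Xi n e = {}"

definition N_weight :: "nat \<Rightarrow> nat \<Rightarrow> nat" where
  "N_weight n d = (\<Sum>e\<in>{e \<in> G_vertices n. G_adj n d e}. class_size n e)"

definition set_mat :: "nat set \<Rightarrow> (nat \<Rightarrow> nat \<Rightarrow> 'a) \<Rightarrow> 'a mat" where
  "set_mat V f = mat (card V) (card V)
     (\<lambda>(i, j). f (sorted_list_of_set V ! i) (sorted_list_of_set V ! j))"

definition laplacian :: "nat set \<Rightarrow> (nat \<Rightarrow> nat \<Rightarrow> bool) \<Rightarrow> complex mat" where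
  "laplacian V adj = set_mat V (\<lambda>i j.
      if i = j then of_nat (card {k \<in> V. adj i k})
      else if adj i j then -1 else 0)"

definition weighted_laplacian_G :: "nat \<Rightarrow> complex mat" where
  "weighted_laplacian_G n = set_mat (G_vertices n) (\<lambda>i j.
      if i = j then of_nat (N_weight n i)
      else if G_adj n i j then - of_nat (class_size n j) else 0)"

definition spectrum_mset :: "complex mat \<Rightarrow> complex multiset" where
  "spectrum_mset A = proots (char_poly A)"

end

theory Submission
  imports Defs
begin

lemma mult_mat_index_sum:
  assumes "i < dim_row A" "j < dim_col B" "dim_col A = dim_row B"
  shows "(A * B) $$ (i,j) = (\<Sum>l<dim_col A. A $$ (i,l) * B $$ (l,j))"
  using assms by (auto simp: scalar_prod_def intro!: sum.cong)

lemma prod_lin_nz: "(\<Prod>x\<leftarrow>xs. [:- f x, 1:]) \<noteq> (0::complex poly)"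
proof (induction xs)
  case (Cons a xs)
  have "[:- f a, 1:] \<noteq> (0::complex poly)" by simp
  then show ?case using Cons by (simp only: list.map prod_list.Cons mult_eq_0_iff) simp
qed simp

lemma proots_lin_list: "proots (\<Prod>x\<leftarrow>xs. [:- f x, 1:]) = (\<Sum>x\<leftarrow>xs. {# (f x :: complex) #})"
proof (induction xs)
  case (Cons a xs)
  have nz: "(\<Prod>x\<leftarrow>xs. [:- f x, 1:]) \<noteq> 0"
    by (rule prod_lin_nz)
  have e: "(\<Prod>x\<leftarrow>a#xs. [:- f x, 1:]) = [:- f a, 1:] * (\<Prod>x\<leftarrow>xs. [:- f x, 1:])" by simp
  have "proots ([:- f a, 1:] * (\<Prod>x\<leftarrow>xs. [:- f x, 1:])) = proots [:- f a, 1:] + proots (\<Prod>x\<leftarrow>xs. [:- f x, 1:])"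
    by (rule proots_mult[OF _ nz]) simp
  then show ?case unfolding e using Cons by simp
qed simp

lemma sum_singleton_mset: "finite X \<Longrightarrow> (\<Sum>i\<in>X. {# y #}) = replicate_mset (card X) y"
  by (induction X rule: finite_induct) auto

locale blk =
  fixes m K :: nat and c :: "nat \<Rightarrow> nat" and A :: "nat \<Rightarrow> nat \<Rightarrow> bool"
    and N :: "nat \<Rightarrow> complex"
  assumes c_lt: "\<And>i. i < m \<Longrightarrow> c i < K"
    and c_surj: "\<And>s. s < K \<Longrightarrow> \<exists>i<m. c i = s"
    and irr: "\<And>s. \<not> A s s"
begin

definition "sz s = card {i. i < m \<and> c i = s}"
definition "r s = (LEAST i. i < m \<and> c i = s)"
definition "nr = filter (\<lambda>i. r (c i) \<noteq> i) [0..<m]"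
definition "d = length nr"

definition "Lm = mat m m (\<lambda>(i,j). if i = j then N (c i) else if A (c i) (c j) then -1 else 0)"
definition "Wm = mat K K (\<lambda>(s,t). if s = t then N s else if A s t then - of_nat (sz t) else 0)"
definition Pm :: "complex mat" where "Pm = mat m m (\<lambda>(i,j). if j < K then (if c i = j then 1 else 0)
                    else (if i = nr ! (j - K) then 1 else 0))"
definition Xm :: "complex mat" where "Xm = mat K d (\<lambda>(t,a). if A t (c (nr ! a)) then -1 else 0)"
definition "Dm = mat d d (\<lambda>(a,b). if a = b then N (c (nr ! a)) else 0)"
definition "Mm = mat m m (\<lambda>(l,j). if l < K then (if j < K then Wm $$ (l,j) else Xm $$ (l, j - K))
                    else (if j \<ge> K \<and> l = j then N (c (nr ! (j - K))) else 0))"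

lemma r_prop: assumes "s < K" shows "r s < m" "c (r s) = s"
proof -
  have "\<exists>i. i < m \<and> c i = s" using c_surj[OF assms] by blast
  from LeastI_ex[OF this] show "r s < m" "c (r s) = s" unfolding r_def by auto
qed

lemma set_nr: "set nr = {i. i < m \<and> r (c i) \<noteq> i}"
  unfolding nr_def by auto

lemma distinct_nr: "distinct nr" unfolding nr_def by auto

lemma nr_lt: "a < d \<Longrightarrow> nr ! a < m"
  using set_nr d_def nth_mem by fastforce

lemma nr_nonrep: "a < d \<Longrightarrow> r (c (nr ! a)) \<noteq> nr ! a"
  using set_nr d_def nth_mem by fastforce

lemma Km: "K + d = m"
proof -
  have d: "d = card {i. i < m \<and> r (c i) \<noteq> i}"
    unfolding d_def using distinct_card[OF distinct_nr] set_nr by simp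
  have reps: "{i. i < m \<and> r (c i) = i} = r ` {..<K}"
  proof
    show "{i. i < m \<and> r (c i) = i} \<subseteq> r ` {..<K}"
    proof
      fix x assume "x \<in> {i. i < m \<and> r (c i) = i}"
      then show "x \<in> r ` {..<K}" using c_lt by (intro image_eqI[where x = "c x"]) auto
    qed
    show "r ` {..<K} \<subseteq> {i. i < m \<and> r (c i) = i}"
      using r_prop by auto
  qed
  have inj: "inj_on r {..<K}"
    by (rule inj_on_inverseI[where g = c]) (use r_prop in auto)
  have "card {i. i < m \<and> r (c i) = i} = K"
    unfolding reps using card_image[OF inj] by simp
  moreover have "card {i. i < m \<and> r (c i) = i} + card {i. i < m \<and> r (c i) \<noteq> i} = card {..<m}"
  proof -
    have "{i. i < m \<and> r (c i) = i} \<union> {i. i < m \<and> r (c i) \<noteq> i} = {..<m}" by auto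
    then show ?thesis by (subst card_Un_disjoint[symmetric]) auto
  qed
  ultimately show ?thesis using d by simp
qed

lemma Lm_carrier: "Lm \<in> carrier_mat m m" unfolding Lm_def by simp
lemma Pm_carrier: "Pm \<in> carrier_mat m m" unfolding Pm_def by simp
lemma Mm_carrier: "Mm \<in> carrier_mat m m" unfolding Mm_def by simp
lemma Wm_carrier: "Wm \<in> carrier_mat K K" unfolding Wm_def by simp
lemma Dm_carrier: "Dm \<in> carrier_mat d d" unfolding Dm_def by simp
lemma Xm_carrier: "Xm \<in> carrier_mat K d" unfolding Xm_def by simp

lemma Mm_block: "Mm = four_block_mat Wm Xm (0\<^sub>m d K) Dm"
  by (rule eq_matI) (insert Km, auto simp: Mm_def Wm_def Xm_def Dm_def)

lemma LP_PM: "Lm * Pm = Pm * Mm"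
proof (rule eq_matI)
  show "dim_row (Lm * Pm) = dim_row (Pm * Mm)" "dim_col (Lm * Pm) = dim_col (Pm * Mm)"
    by (simp_all add: Lm_def Pm_def Mm_def)
  fix i j assume ij: "i < dim_row (Pm * Mm)" "j < dim_col (Pm * Mm)"
  then have i: "i < m" and j: "j < m" by (simp_all add: Pm_def Mm_def)
  have L: "(Lm * Pm) $$ (i,j) = (\<Sum>l<m. Lm $$ (i,l) * Pm $$ (l,j))"
    using i j by (subst mult_mat_index_sum) (simp_all add: Lm_def Pm_def)
  have R: "(Pm * Mm) $$ (i,j) = (\<Sum>l<m. Pm $$ (i,l) * Mm $$ (l,j))"
    using i j by (subst mult_mat_index_sum) (simp_all add: Mm_def Pm_def)
  show "(Lm * Pm) $$ (i,j) = (Pm * Mm) $$ (i,j)"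
  proof (cases "j < K")
    case True
    have "(\<Sum>l<m. Lm $$ (i,l) * Pm $$ (l,j)) = (\<Sum>l\<in>{l. l < m \<and> c l = j}. Lm $$ (i,l))"
    proof -
      have "(\<Sum>l<m. Lm $$ (i,l) * Pm $$ (l,j)) = (\<Sum>l<m. if c l = j then Lm $$ (i,l) else 0)"
        using True j by (intro sum.cong) (auto simp: Pm_def)
      also have "\<dots> = (\<Sum>l\<in>{l\<in>{..<m}. c l = j}. Lm $$ (i,l))"
        by (rule sum.inter_filter[symmetric]) simp
      also have "{l\<in>{..<m}. c l = j} = {l. l < m \<and> c l = j}" by auto
      finally show ?thesis .
    qed
    also have "\<dots> = Wm $$ (c i, j)"
    proof (cases "c i = j")
      case True
      have "(\<Sum>l\<in>{l. l < m \<and> c l = j}. Lm $$ (i,l)) = (\<Sum>l\<in>{l. l < m \<and> c l = j}. if l = i then N j else 0)"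
        using True i by (intro sum.cong) (auto simp: Lm_def irr)
      also have "\<dots> = N j" using True i by (simp add: sum.delta)
      finally show ?thesis using True c_lt[OF i] by (simp add: Wm_def)
    next
      case False
      have "(\<Sum>l\<in>{l. l < m \<and> c l = j}. Lm $$ (i,l)) = (\<Sum>l\<in>{l. l < m \<and> c l = j}. if A (c i) j then -1 else 0)"
        using False i by (intro sum.cong) (auto simp: Lm_def)
      also have "\<dots> = (if A (c i) j then - of_nat (sz j) else 0)"
        by (simp add: sz_def)
      finally show ?thesis using False c_lt[OF i] \<open>j < K\<close> by (simp add: Wm_def)
    qed
    also have "\<dots> = (\<Sum>l<m. Pm $$ (i,l) * Mm $$ (l,j))"
    proof -
      have "(\<Sum>l<m. Pm $$ (i,l) * Mm $$ (l,j)) = (\<Sum>l<m. if l = c i then Wm $$ (c i, j) else 0)"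
        using i \<open>j < K\<close> Km c_lt[OF i] by (intro sum.cong) (auto simp: Pm_def Mm_def)
      also have "\<dots> = Wm $$ (c i, j)" using c_lt[OF i] Km by (simp add: sum.delta)
      finally show ?thesis by simp
    qed
    finally show ?thesis using L R by simp
  next
    case False
    define a where "a = j - K"
    define v where "v = nr ! a"
    have a: "a < d" using False j Km a_def by auto
    have v: "v < m" "r (c v) \<noteq> v" using nr_lt[OF a] nr_nonrep[OF a] v_def by auto
    have "(\<Sum>l<m. Lm $$ (i,l) * Pm $$ (l,j)) = (\<Sum>l<m. if l = v then Lm $$ (i,v) else 0)"
      using False j by (intro sum.cong) (auto simp: Pm_def a_def v_def)
    also have "\<dots> = Lm $$ (i,v)" using v by (simp add: sum.delta)
    also have "\<dots> = Xm $$ (c i, a) + (if i = v then N (c v) else 0)"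
      using i v a c_lt[OF i] by (auto simp: Lm_def Xm_def v_def irr)
    also have "\<dots> = (\<Sum>l<m. Pm $$ (i,l) * Mm $$ (l,j))"
    proof -
      have "(\<Sum>l<m. Pm $$ (i,l) * Mm $$ (l,j)) = (\<Sum>l<m. (if l = c i then Xm $$ (c i, a) else 0) + (if l = j then (if i = v then N (c v) else 0) else 0))"
        using i j False Km c_lt[OF i] by (intro sum.cong) (auto simp: Pm_def Mm_def a_def v_def)
      also have "\<dots> = Xm $$ (c i, a) + (if i = v then N (c v) else 0)"
        using c_lt[OF i] Km j False by (simp add: sum.distrib)
      finally show ?thesis by simp
    qed
    finally show ?thesis using L R by simp
  qed
qed

lemma Pm_mulv: "x \<in> carrier_vec m \<Longrightarrow> i < m \<Longrightarrow> (Pm *\<^sub>v x) $ i = (\<Sum>l<m. Pm $$ (i,l) * x $ l)"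
  by (auto simp: Pm_def scalar_prod_def intro!: sum.cong)

lemma det_Pm: "det Pm \<noteq> 0"
proof
  assume "det Pm = 0"
  then have "\<exists>v. v \<in> carrier_vec m \<and> v \<noteq> 0\<^sub>v m \<and> Pm *\<^sub>v v = 0\<^sub>v m"
    using det_0_iff_vec_prod_zero[OF Pm_carrier] by blast
  then obtain x where x: "x \<in> carrier_vec m" "x \<noteq> 0\<^sub>v m" "Pm *\<^sub>v x = 0\<^sub>v m"
    by blast
  have xs: "x $ s = 0" if s: "s < K" for s
  proof -
    have "0 = (Pm *\<^sub>v x) $ r s" using x(3) r_prop[OF s] by simp
    also have "\<dots> = (\<Sum>l<m. Pm $$ (r s,l) * x $ l)" using Pm_mulv[OF x(1) r_prop(1)[OF s]] .
    also have "\<dots> = (\<Sum>l<m. if l = s then x $ s else 0)"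
    proof (intro sum.cong refl)
      fix l assume l: "l \<in> {..<m}"
      show "Pm $$ (r s,l) * x $ l = (if l = s then x $ s else 0)"
      proof (cases "l < K")
        case False
        then have "l - K < d" using l Km by auto
        then have "nr ! (l - K) \<noteq> r s"
          using nr_nonrep[of "l - K"] r_prop[OF s] by metis
        then show ?thesis using False l r_prop[OF s] s by (auto simp: Pm_def)
      qed (use l r_prop[OF s] in \<open>auto simp: Pm_def\<close>)
    qed
    also have "\<dots> = x $ s" using s Km by (simp add: sum.delta)
    finally show ?thesis by simp
  qed
  have xa: "x $ (K + a) = 0" if a: "a < d" for a
  proof -
    define i where "i = nr ! a"
    have i: "i < m" using nr_lt[OF a] i_def by simp
    have "0 = (Pm *\<^sub>v x) $ i" using x(3) i by simp
    also have "\<dots> = (\<Sum>l<m. Pm $$ (i,l) * x $ l)" using Pm_mulv[OF x(1) i] .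
    also have "\<dots> = (\<Sum>l<m. (if l = c i then x $ c i else 0) + (if l = K + a then x $ (K + a) else 0))"
    proof (intro sum.cong refl)
      fix l assume l: "l \<in> {..<m}"
      show "Pm $$ (i,l) * x $ l = (if l = c i then x $ c i else 0) + (if l = K + a then x $ (K + a) else 0)"
      proof (cases "l < K")
        case False
        then have la: "l - K < d" using l Km by auto
        have "(nr ! (l - K) = nr ! a) = (l - K = a)"
          using nth_eq_iff_index_eq[OF distinct_nr la[unfolded d_def]] a d_def by simp
        then show ?thesis using False l a c_lt[OF i] nr_lt[OF a] nr_lt[OF la] by (auto simp: Pm_def i_def)
      qed (use l i c_lt[OF i] in \<open>auto simp: Pm_def\<close>)
    qed
    also have "\<dots> = x $ c i + x $ (K + a)" using c_lt[OF i] a Km i by (simp add: sum.distrib sum.delta)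
    finally show ?thesis using xs[OF c_lt[OF i]] by simp
  qed
  have "x = 0\<^sub>v m"
  proof (rule eq_vecI)
    fix i assume "i < dim_vec (0\<^sub>v m)"
    then have i: "i < m" by simp
    show "x $ i = 0\<^sub>v m $ i"
    proof (cases "i < K")
      case True then show ?thesis using xs i by simp
    next
      case False
      then have "i = K + (i - K)" "i - K < d" using i Km by auto
      then show ?thesis using xa[of "i - K"] i by simp
    qed
  qed (use x in auto)
  with x(2) show False by simp
qed

lemma cp_LM: "char_poly Lm = char_poly Mm"
proof -
  from det_non_zero_imp_unit[OF Pm_carrier det_Pm, unfolded Units_def, of "()"]
  have "\<exists>Q. Q \<in> carrier_mat m m \<and> Q * Pm = 1\<^sub>m m \<and> Pm * Q = 1\<^sub>m m"
    by (simp add: ring_mat_def, blast)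
  then obtain Q where Q: "Q \<in> carrier_mat m m" "Q * Pm = 1\<^sub>m m" "Pm * Q = 1\<^sub>m m"
    by blast
  have "Lm = Lm * (Pm * Q)" using Q Lm_carrier by simp
  also have "\<dots> = (Lm * Pm) * Q" using Q Lm_carrier Pm_carrier by (simp add: assoc_mult_mat)
  also have "\<dots> = Pm * Mm * Q" by (simp add: LP_PM)
  finally have "Lm = Pm * Mm * Q" .
  then have "similar_mat Lm Mm"
    using Q Lm_carrier Pm_carrier Mm_carrier by (intro similar_matI[where n = m and P = Pm and Q = Q]) auto
  then show ?thesis by (rule char_poly_similar)
qed

lemma cp_M: "char_poly Mm = char_poly Wm * char_poly Dm"
proof -
  let ?cm = "\<lambda> A. [:0, 1:] \<cdot>\<^sub>m 1\<^sub>m (dim_row A) + map_mat (\<lambda>a. [:- a:]) A"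
  let ?B2 = "map_mat (\<lambda>a. [:- a:]) Xm"
  have "char_poly Mm = det (?cm Mm)" unfolding char_poly_defs ..
  also have "?cm Mm = four_block_mat (?cm Wm) ?B2 (0\<^sub>m d K) (?cm Dm)"
    unfolding Mm_block
    by (rule eq_matI, insert Wm_carrier Xm_carrier Dm_carrier, auto simp: one_poly_def Xm_def)
  also have "det \<dots> = det (?cm Wm) * det (?cm Dm)"
    by (rule det_four_block_mat_lower_left_zero[OF _ _ refl], insert Wm_carrier Xm_carrier Dm_carrier, auto)
  also have "\<dots> = char_poly Wm * char_poly Dm" unfolding char_poly_defs ..
  finally show ?thesis .
qed

lemma cp_nz: "B \<in> carrier_mat k k \<Longrightarrow> char_poly B \<noteq> 0"
  using degree_monic_char_poly[of B k] by auto

lemma cp_D: "proots (char_poly Dm) = (\<Sum>s<K. replicate_mset (sz s - 1) (N s))"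
proof -
  have ut: "upper_triangular Dm" unfolding upper_triangular_def Dm_def by auto
  have "char_poly Dm = (\<Prod>a\<leftarrow>diag_mat Dm. [:- a, 1:])"
    by (rule char_poly_upper_triangular[OF Dm_carrier ut])
  also have "diag_mat Dm = map (\<lambda>i. N (c i)) nr"
    unfolding diag_mat_def Dm_def d_def by (auto intro!: nth_equalityI)
  finally have "char_poly Dm = (\<Prod>p\<leftarrow>map (\<lambda>i. [:- N (c i), 1:]) nr. p)"
    by (simp add: comp_def)
  then have "proots (char_poly Dm) = (\<Sum>i\<leftarrow>nr. {# N (c i) #})"
    by (simp add: proots_lin_list)
  also have "\<dots> = (\<Sum>i\<in>set nr. {# N (c i) #})"
    by (rule sum_list_distinct_conv_sum_set[OF distinct_nr])
  also have "\<dots> = (\<Sum>s<K. (\<Sum>i\<in>{i. i \<in> set nr \<and> c i = s}. {# N (c i) #}))"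
  proof -
    have sub: "c ` set nr \<subseteq> {..<K}"
    proof
      fix y assume "y \<in> c ` set nr"
      then obtain i where i: "i \<in> set nr" "y = c i" by blast
      then have "i < m" unfolding set_nr by simp
      then show "y \<in> {..<K}" using i c_lt by simp
    qed
    show ?thesis by (rule sum.group[where S="set nr" and T="{..<K}" and g=c and h="\<lambda>i. {# N (c i) #}", OF finite_set finite_lessThan sub, symmetric])
  qed
  also have "\<dots> = (\<Sum>s<K. replicate_mset (sz s - 1) (N s))"
  proof (rule sum.cong[OF refl])
    fix s assume s: "s \<in> {..<K}"
    have rs: "r s < m" "c (r s) = s" using r_prop s by auto
    have eq: "{i. i \<in> set nr \<and> c i = s} = {i. i < m \<and> c i = s} - {r s}"
    proof -
      have "\<And>i. c i = s \<Longrightarrow> (r (c i) \<noteq> i) = (i \<noteq> r s)" by (metis)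
      then show ?thesis unfolding set_nr by blast
    qed
    have fin: "finite {i. i < m \<and> c i = s}" by simp
    have rin: "r s \<in> {i. i < m \<and> c i = s}" using rs by simp
    have card: "card {i. i \<in> set nr \<and> c i = s} = sz s - 1"
      unfolding eq sz_def by (rule card_Diff_singleton[OF rin])
    have "(\<Sum>i\<in>{i. i \<in> set nr \<and> c i = s}. {# N (c i) #}) = (\<Sum>i\<in>{i. i \<in> set nr \<and> c i = s}. {# N s #})"
      by (rule sum.cong) auto
    also have "\<dots> = replicate_mset (sz s - 1) (N s)"
      using sum_singleton_mset[of "{i. i \<in> set nr \<and> c i = s}" "N s"] card by simp
    finally show "(\<Sum>i\<in>{i. i \<in> set nr \<and> c i = s}. {# N (c i) #}) = replicate_mset (sz s - 1) (N s)" .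
  qed
  finally show ?thesis .
qed

lemma spec_L: "proots (char_poly Lm) = proots (char_poly Wm) + (\<Sum>s<K. replicate_mset (sz s - 1) (N s))"
  unfolding cp_LM cp_M cp_D[symmetric]
  by (rule proots_mult) (use cp_nz[OF Wm_carrier] cp_nz[OF Dm_carrier] in auto)

end

definition gS :: "nat \<Rightarrow> nat set \<Rightarrow> nat" where
  "gS n S = (\<Prod>p\<in>S. p ^ multiplicity p n)"

lemma mult_le_n: "d dvd n \<Longrightarrow> n > 0 \<Longrightarrow> multiplicity p d \<le> multiplicity p (n::nat)"
  by (rule dvd_imp_multiplicity_le) auto

lemma Xi_sub: "Xi n d \<subseteq> prime_factors n"
  unfolding Xi_def by auto

lemma mult_not_pf: "prime p \<Longrightarrow> p \<notin> prime_factors n \<Longrightarrow> d dvd n \<Longrightarrow> n > 0 \<Longrightarrow> multiplicity p (d::nat) = 0"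
proof -
  assume p: "prime p" "p \<notin> prime_factors n" "d dvd n" "n > 0"
  then have "multiplicity p n = 0"
    by (simp add: prime_factors_multiplicity)
  with mult_le_n[OF p(3,4), of p] show ?thesis by simp
qed

lemma dvd_eq_by_Xi:
  assumes "n > 0" "d dvd n" "e dvd (n::nat)"
    and "\<And>p. p \<in> prime_factors n \<Longrightarrow> multiplicity p d = multiplicity p e"
  shows "d = e"
proof (rule multiplicity_eq_nat)
  show "d > 0" "e > 0" using assms by (auto intro: dvd_pos_nat)
  fix p :: nat assume p: "prime p"
  show "multiplicity p d = multiplicity p e"
  proof (cases "p \<in> prime_factors n")
    case True then show ?thesis using assms(4) by simp
  next
    case False then show ?thesis using mult_not_pf[OF p False] assms by simp
  qed
qed

lemma Xi_all: assumes "n > 0" "d dvd n" "Xi n d = prime_factors n" shows "d = n"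
  by (rule dvd_eq_by_Xi[OF assms(1,2)]) (use assms(3) in \<open>auto simp: Xi_def\<close>)

lemma ess_iff:
  assumes n: "n > 0" and d: "d dvd (n::nat)"
  shows "essential_ideal n d \<longleftrightarrow> Xi n d = {}"
proof
  assume ess: "essential_ideal n d"
  show "Xi n d = {}"
  proof (rule ccontr)
    assume "Xi n d \<noteq> {}"
    then obtain p where p: "p \<in> prime_factors n" "multiplicity p d = multiplicity p n"
      unfolding Xi_def by auto
    have pp: "prime p" using p by auto
    define k where "k = multiplicity p n"
    have k: "k > 0" using p(1) k_def by (simp add: prime_factors_multiplicity)
    define e where "e = n div p ^ k"
    have pk: "p ^ k dvd n" unfolding k_def by (rule multiplicity_dvd)
    have ne: "n = e * p ^ k" using pk e_def by simp
    have e_dvd: "e dvd n" using ne by simp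
    have e0: "e > 0" using ne n by (cases "e = 0") auto
    have "p ^ k > 1" using one_less_power[OF prime_gt_1_nat[OF pp] k] .
    have e_ne: "e \<noteq> n"
    proof
      assume "e = n"
      then have "n * 1 = n * p ^ k" using ne by simp
      then have "p ^ k = 1" using n by simp
      with \<open>p ^ k > 1\<close> show False by simp
    qed
    have d0: "d > 0" using d n by (auto intro: dvd_pos_nat)
    have "lcm d e = n"
    proof (rule multiplicity_eq_nat)
      show "lcm d e > 0" using d0 e0 by (simp add: lcm_pos_nat)
      show "n > 0" by (rule n)
      fix q :: nat assume q: "prime q"
      have qe: "prime_elem q" using q by simp
      have pk0: "p ^ k \<noteq> 0" using pp by simp
      have me: "multiplicity q n = multiplicity q e + multiplicity q (p ^ k)"
        using prime_elem_multiplicity_mult_distrib[OF qe _ pk0, of e] e0 ne by simp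
      have dz: "d \<noteq> 0" "e \<noteq> 0" using d0 e0 by auto
      have ml: "multiplicity q (lcm d e) = max (multiplicity q d) (multiplicity q e)"
        by (rule multiplicity_lcm[OF dz q])
      show "multiplicity q (lcm d e) = multiplicity q n"
      proof (cases "q = p")
        case True
        have "multiplicity q (p ^ k) = k" using True pp
          by (simp add: multiplicity_same_power)
        then have "multiplicity q e = 0" using me k_def True by simp
        then show ?thesis using True p(2) ml by simp
      next
        case False
        have "multiplicity q p = 0" using prime_multiplicity_other[OF q pp False] .
        then have "multiplicity q (p ^ k) = 0"
          using prime_elem_multiplicity_power_distrib[OF qe, of p k] pp by simp
        then have "multiplicity q e = multiplicity q n" using me by simp
        then show ?thesis using mult_le_n[OF d n, of q] ml by simp
      qed
    qed
    then show False using ess e_dvd e_ne unfolding essential_ideal_def by blast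
  qed
next
  assume X: "Xi n d = {}"
  show "essential_ideal n d"
    unfolding essential_ideal_def
  proof (intro allI impI)
    fix e assume e: "e dvd n \<and> e \<noteq> n"
    show "lcm d e \<noteq> n"
    proof
      assume l: "lcm d e = n"
      have d0: "d > 0" "e > 0" using d e n by (auto intro: dvd_pos_nat)
      have "e = n"
      proof (rule dvd_eq_by_Xi[OF n])
        show "e dvd n" using e by simp
        show "n dvd n" by simp
        fix p assume p: "p \<in> prime_factors n"
        have "multiplicity p d \<noteq> multiplicity p n" using X p unfolding Xi_def by auto
        moreover have "max (multiplicity p d) (multiplicity p e) = multiplicity p n"
        proof -
          have pp: "prime p" using p by auto
          have "d \<noteq> 0" "e \<noteq> 0" using d0 by auto
          from multiplicity_lcm[OF this pp] l show ?thesis by simp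
        qed
        ultimately show "multiplicity p e = multiplicity p n" by linarith
      qed
      with e show False by simp
    qed
  qed
qed

lemma Xi_gcd:
  assumes n: "n > 0" and d: "d dvd (n::nat)" and e: "e dvd n"
  shows "Xi n (gcd d e) = Xi n d \<inter> Xi n e"
proof -
  have d0: "d \<noteq> 0" "e \<noteq> 0" using d e n by auto
  have "p \<in> Xi n (gcd d e) \<longleftrightarrow> p \<in> Xi n d \<inter> Xi n e" for p
  proof (cases "p \<in> prime_factors n")
    case True
    then have pp: "prime p" by auto
    show ?thesis unfolding Xi_def
      using mult_le_n[OF d n, of p] mult_le_n[OF e n, of p] True multiplicity_gcd[OF d0 pp]
      by auto
  qed (auto simp: Xi_def)
  then show ?thesis by blast
qed

lemma mult_gS: "S \<subseteq> prime_factors n \<Longrightarrow> prime p \<Longrightarrow>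
   multiplicity p (gS n S) = (if p \<in> S then multiplicity p n else 0)"
  unfolding gS_def
  by (rule multiplicity_prod_prime_powers) (auto intro: finite_subset)

lemma gS_dvd: assumes "S \<subseteq> prime_factors n" "n > 0" shows "gS n S dvd n"
proof (rule multiplicity_le_imp_dvd)
  have "\<And>p. p \<in> S \<Longrightarrow> p > 0" using assms(1) by (auto intro: prime_gt_0_nat)
  moreover have "finite S" using assms(1) by (rule finite_subset) simp
  ultimately show "gS n S \<noteq> 0" unfolding gS_def by (subst prod_zero_iff) auto
  fix p :: nat assume "prime p"
  then show "multiplicity p (gS n S) \<le> multiplicity p n" using mult_gS[OF assms(1)] by simp
qed

lemma Xi_gS: assumes "S \<subseteq> prime_factors n" shows "Xi n (gS n S) = S"
proof -
  have "\<And>p. p \<in> prime_factors n \<Longrightarrow> multiplicity p n > 0"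
    by (simp add: prime_factors_multiplicity)
  have "p \<in> Xi n (gS n S) \<longleftrightarrow> p \<in> S" for p
  proof (cases "p \<in> prime_factors n")
    case True
    then have "prime p" by auto
    from mult_gS[OF assms this] True \<open>\<And>p. p \<in> prime_factors n \<Longrightarrow> multiplicity p n > 0\<close>[OF True]
    show ?thesis unfolding Xi_def by auto
  next
    case False
    then show ?thesis using assms unfolding Xi_def by auto
  qed
  then show ?thesis by blast
qed

lemma G_vertices_alt: "G_vertices n = gS n ` {S. S \<subseteq> prime_factors n \<and> S \<noteq> {} \<and> S \<noteq> prime_factors n}"
  unfolding G_vertices_def gS_def image_def by blast

lemma G_gS_Xi: "g \<in> G_vertices n \<Longrightarrow> gS n (Xi n g) = g"
  unfolding G_vertices_alt using Xi_gS by auto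

lemma G_Xi: "g \<in> G_vertices n \<Longrightarrow> Xi n g \<noteq> {} \<and> Xi n g \<noteq> prime_factors n"
  unfolding G_vertices_alt using Xi_gS by auto

lemma U_char:
  assumes n: "n > 0"
  shows "d \<in> noness_ideals n \<longleftrightarrow> d dvd n \<and> Xi n d \<noteq> {} \<and> Xi n d \<noteq> prime_factors n"
proof
  assume d: "d \<in> noness_ideals n"
  then have dd: "d dvd n" "d \<noteq> n" "\<not> essential_ideal n d"
    unfolding noness_ideals_def nzp_ideals_def by auto
  then show "d dvd n \<and> Xi n d \<noteq> {} \<and> Xi n d \<noteq> prime_factors n"
    using ess_iff[OF n dd(1)] Xi_all[OF n dd(1)] by auto
next
  assume d: "d dvd n \<and> Xi n d \<noteq> {} \<and> Xi n d \<noteq> prime_factors n"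
  have "d \<noteq> 1"
  proof
    assume "d = 1"
    then have "Xi n d = {}" unfolding Xi_def by (auto simp: prime_factors_multiplicity)
    with d show False by simp
  qed
  moreover have "d \<noteq> n"
  proof
    assume "d = n" then have "Xi n d = prime_factors n" unfolding Xi_def by auto
    with d show False by simp
  qed
  ultimately show "d \<in> noness_ideals n"
    using d ess_iff[OF n] unfolding noness_ideals_def nzp_ideals_def by auto
qed

lemma G_sub_U: assumes n: "n > 0" and g: "g \<in> G_vertices n" shows "g \<in> noness_ideals n"
proof -
  have "gS n (Xi n g) dvd n" by (rule gS_dvd[OF Xi_sub n])
  then have "g dvd n" using G_gS_Xi[OF g] by simp
  then show ?thesis using U_char[OF n] G_Xi[OF g] by simp
qed

lemma U_class: assumes n: "n > 0" and d: "d \<in> noness_ideals n" shows "gS n (Xi n d) \<in> G_vertices n"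
  unfolding G_vertices_alt using U_char[OF n] d Xi_sub[of n d] by (intro imageI) simp

lemma finite_U: "n > 0 \<Longrightarrow> finite (noness_ideals n)"
  by (rule finite_subset[of _ "{d. d dvd n}"]) (auto simp: U_char)

lemma finite_G: "finite (G_vertices n)"
  unfolding G_vertices_alt by simp

lemma adj_iff:
  assumes n: "n > 0" and d: "d \<in> noness_ideals n" and k: "k \<in> noness_ideals n"
  shows "ess_adj n d k \<longleftrightarrow> Xi n d \<inter> Xi n k = {}"
proof -
  have dd: "d dvd n" "Xi n d \<noteq> {}" using U_char[OF n] d by auto
  have kd: "k dvd n" using U_char[OF n] k by auto
  have g: "gcd d k dvd n" using dd(1) by (rule dvd_trans[rotated]) simp
  have "ess_adj n d k \<longleftrightarrow> d \<noteq> k \<and> Xi n d \<inter> Xi n k = {}"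
    unfolding ess_adj_def using ess_iff[OF n g] Xi_gcd[OF n dd(1) kd] by simp
  also have "\<dots> \<longleftrightarrow> Xi n d \<inter> Xi n k = {}" using dd(2) by auto
  finally show ?thesis .
qed

lemma degree_eq:
  assumes n: "n > 0" and d: "d \<in> noness_ideals n"
  shows "card {k \<in> noness_ideals n. ess_adj n d k} = N_weight n (gS n (Xi n d))"
proof -
  define g where "g = gS n (Xi n d)"
  have Xg: "Xi n g = Xi n d" unfolding g_def by (rule Xi_gS[OF Xi_sub])
  define E where "E = {e \<in> G_vertices n. G_adj n g e}"
  have "{k \<in> noness_ideals n. ess_adj n d k} = {k \<in> noness_ideals n. Xi n d \<inter> Xi n k = {}}"
    using adj_iff[OF n d] by auto
  also have "\<dots> = (\<Union>e\<in>E. ideal_class n e)"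
  proof (rule Set.set_eqI)
    fix k show "k \<in> {k \<in> noness_ideals n. Xi n d \<inter> Xi n k = {}} \<longleftrightarrow> k \<in> (\<Union>e\<in>E. ideal_class n e)"
  proof
    assume k: "k \<in> {k \<in> noness_ideals n. Xi n d \<inter> Xi n k = {}}"
    define e where "e = gS n (Xi n k)"
    have eG: "e \<in> G_vertices n" unfolding e_def using U_class[OF n] k by simp
    have Xe: "Xi n e = Xi n k" unfolding e_def by (rule Xi_gS[OF Xi_sub])
    have "e \<in> E" unfolding E_def G_adj_def using eG Xe Xg k by simp
    moreover have "k \<in> ideal_class n e" unfolding ideal_class_def using k Xe by simp
    ultimately show "k \<in> (\<Union>e\<in>E. ideal_class n e)" by blast
  next
    assume "k \<in> (\<Union>e\<in>E. ideal_class n e)"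
    then obtain e where e: "e \<in> E" "k \<in> ideal_class n e" by blast
    then show "k \<in> {k \<in> noness_ideals n. Xi n d \<inter> Xi n k = {}}"
      unfolding E_def ideal_class_def G_adj_def using Xg by auto
  qed
  qed
  finally have eq: "{k \<in> noness_ideals n. ess_adj n d k} = (\<Union>e\<in>E. ideal_class n e)" .
  have finE: "finite E" unfolding E_def using finite_G by simp
  have finC: "\<forall>e\<in>E. finite (ideal_class n e)"
    unfolding ideal_class_def using finite_U[OF n] by simp
  have disj: "\<forall>e\<in>E. \<forall>e'\<in>E. e \<noteq> e' \<longrightarrow> ideal_class n e \<inter> ideal_class n e' = {}"
  proof (intro ballI impI)
    fix e e' assume e: "e \<in> E" "e' \<in> E" "e \<noteq> e'"
    have "Xi n e \<noteq> Xi n e'"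
    proof
      assume "Xi n e = Xi n e'"
      then have "gS n (Xi n e) = gS n (Xi n e')" by simp
      then show False using G_gS_Xi e unfolding E_def by auto
    qed
    then show "ideal_class n e \<inter> ideal_class n e' = {}"
      unfolding ideal_class_def by auto
  qed
  have "card {k \<in> noness_ideals n. ess_adj n d k} = (\<Sum>e\<in>E. card (ideal_class n e))"
    unfolding eq by (rule card_UN_disjoint[OF finE finC disj])
  also have "\<dots> = N_weight n g" unfolding N_weight_def E_def class_size_def by simp
  finally show ?thesis unfolding g_def .
qed

lemma class_size_prod:
  assumes n: "n > 0" and g: "g \<in> G_vertices n"
  shows "class_size n g = (\<Prod>p\<in>prime_factors n - Xi n g. multiplicity p n)"
proof -
  define S where "S = Xi n g"
  define P where "P = prime_factors n"
  have SP: "S \<subseteq> P" "S \<noteq> {}" "S \<noteq> P" using G_Xi[OF g] Xi_sub unfolding S_def P_def by auto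
  have finP: "finite P" unfolding P_def by simp
  define C where "C = ideal_class n g"
  define h where "h = (\<lambda>e. restrict (\<lambda>p. multiplicity p e) (P - S))"
  define T where "T = PiE (P - S) (\<lambda>p. {..<multiplicity p n})"
  have C_char: "e \<in> C \<longleftrightarrow> e dvd n \<and> Xi n e = S" for e
    unfolding C_def ideal_class_def S_def using U_char[OF n] G_Xi[OF g] by auto
  have inj: "inj_on h C"
  proof (rule inj_onI)
    fix e e' assume e: "e \<in> C" "e' \<in> C" "h e = h e'"
    show "e = e'"
    proof (rule dvd_eq_by_Xi[OF n])
      show "e dvd n" "e' dvd n" using e C_char by auto
      fix p assume p: "p \<in> prime_factors n"
      show "multiplicity p e = multiplicity p e'"
      proof (cases "p \<in> S")
        case True
        have "Xi n e = S" "Xi n e' = S" using e(1,2) C_char by auto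
        then have "p \<in> Xi n e" "p \<in> Xi n e'" using True by auto
        then show ?thesis unfolding Xi_def by simp
      next
        case False
        have "h e p = h e' p" using e(3) by simp
        then show ?thesis using False p unfolding h_def P_def by simp
      qed
    qed
  qed
  have Xi_mem: "\<And>p e. p \<in> Xi n e \<longleftrightarrow> p \<in> P \<and> multiplicity p e = multiplicity p n"
    unfolding Xi_def P_def by simp
  have img: "h ` C = T"
  proof
    show "h ` C \<subseteq> T"
    proof
      fix f assume "f \<in> h ` C"
      then obtain e where e: "e \<in> C" "f = h e" by blast
      have ed: "e dvd n" "Xi n e = S" using e C_char by auto
      have "\<forall>p\<in>P - S. multiplicity p e \<in> {..<multiplicity p n}"
      proof
        fix p assume p: "p \<in> P - S"
        have "multiplicity p e \<le> multiplicity p n" by (rule mult_le_n[OF ed(1) n])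
        moreover have "p \<notin> Xi n e" using p ed(2) by simp
        then have "multiplicity p e \<noteq> multiplicity p n" using p Xi_mem by simp
        ultimately show "multiplicity p e \<in> {..<multiplicity p n}" by simp
      qed
      then show "f \<in> T" unfolding T_def e(2) h_def by (subst restrict_PiE_iff) simp
    qed
  next
    show "T \<subseteq> h ` C"
    proof
    fix f assume f: "f \<in> T"
    define ex where "ex = (\<lambda>p. if p \<in> S then multiplicity p n else f p)"
    define e where "e = (\<Prod>p\<in>P. p ^ ex p)"
    have pr: "\<And>p. p \<in> P \<Longrightarrow> prime p" unfolding P_def by auto
    have me: "multiplicity q e = (if q \<in> P then ex q else 0)" if q: "prime q" for q
      unfolding e_def by (rule multiplicity_prod_prime_powers[OF finP pr q])
    have fl: "\<And>p. p \<in> P - S \<Longrightarrow> f p < multiplicity p n" using f unfolding T_def by auto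
    have e0: "e \<noteq> 0"
    proof -
      have "\<And>p. p \<in> P \<Longrightarrow> p > 0" using pr by (simp add: prime_gt_0_nat)
      then show ?thesis unfolding e_def using finP by (subst prod_zero_iff) auto
    qed
    have edvd: "e dvd n"
    proof (rule multiplicity_le_imp_dvd[OF e0])
      fix q :: nat assume q: "prime q"
      show "multiplicity q e \<le> multiplicity q n"
      proof (cases "q \<in> P")
        case True
        show ?thesis
        proof (cases "q \<in> S")
          case True2: True
          then show ?thesis using me[OF q] True unfolding ex_def by simp
        next
          case False
          then show ?thesis using me[OF q] True fl[of q] unfolding ex_def by simp
        qed
      qed (use me[OF q] in simp)
    qed
    have Xe: "Xi n e = S"
    proof
      show "Xi n e \<subseteq> S"
      proof
        fix p assume "p \<in> Xi n e"
        then have p: "p \<in> P" "multiplicity p e = multiplicity p n" using Xi_mem by auto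
        show "p \<in> S"
        proof (rule ccontr)
          assume nS: "p \<notin> S"
          then have "multiplicity p e = f p" using me[OF pr[OF p(1)]] p(1) unfolding ex_def by simp
          with fl[of p] p nS show False by simp
        qed
      qed
      show "S \<subseteq> Xi n e"
      proof
        fix p assume p: "p \<in> S"
        then have pP: "p \<in> P" using SP by auto
        have "multiplicity p e = multiplicity p n" using me[OF pr[OF pP]] pP p unfolding ex_def by simp
        then show "p \<in> Xi n e" using Xi_mem pP by simp
      qed
    qed
    have eC: "e \<in> C" using C_char edvd Xe by simp
    have "h e = f"
    proof (rule ext)
      fix p show "h e p = f p"
      proof (cases "p \<in> P - S")
        case True
        then have "multiplicity p e = f p" using me[OF pr] unfolding ex_def by simp
        then show ?thesis using True unfolding h_def by simp
      next
        case False
        have "f p = undefined" using PiE_arb[of f "P - S" "\<lambda>p. {..<multiplicity p n}" p] f False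
          unfolding T_def by blast
        then show ?thesis using False unfolding h_def by auto
      qed
    qed
    then show "f \<in> h ` C" using eC by blast
    qed
  qed
  have "class_size n g = card C" unfolding class_size_def C_def ..
  also have "\<dots> = card T" using card_image[OF inj] img by simp
  also have "\<dots> = (\<Prod>p\<in>P - S. card {..<multiplicity p n})"
    unfolding T_def by (rule card_PiE) (use finP in simp)
  also have "\<dots> = (\<Prod>p\<in>P - S. multiplicity p n)" by simp
  finally show ?thesis unfolding P_def S_def .
qed


definition pos :: "'a list \<Rightarrow> 'a \<Rightarrow> nat" where
  "pos xs x = (LEAST i. i < length xs \<and> xs ! i = x)"

lemma pos_prop: assumes "x \<in> set xs" shows "pos xs x < length xs" "xs ! pos xs x = x"
proof -
  have "\<exists>i. i < length xs \<and> xs ! i = x" using assms by (simp add: in_set_conv_nth)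
  from LeastI_ex[OF this] show "pos xs x < length xs" "xs ! pos xs x = x" unfolding pos_def by auto
qed

lemma pos_nth: assumes "distinct xs" "i < length xs" shows "pos xs (xs ! i) = i"
proof -
  have "pos xs (xs ! i) < length xs" "xs ! pos xs (xs ! i) = xs ! i" using pos_prop[of "xs ! i" xs] assms by auto
  then show ?thesis using nth_eq_iff_index_eq[OF assms(1)] assms(2) by blast
qed

theorem mainTheorem11:
  fixes n :: nat
  assumes "n > 1" and "\<not> prime n"
  shows "spectrum_mset (laplacian (noness_ideals n) (ess_adj n)) =
    (\<Sum>I\<in>{I \<in> G_vertices n. class_size n I > 1}.
        replicate_mset ((\<Prod>p\<in>prime_factors n - Xi n I. multiplicity p n) - 1)
                       (of_nat (N_weight n I)))
    + spectrum_mset (weighted_laplacian_G n)"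
proof -
  have n: "n > 0" using assms by simp
  define U where "U = noness_ideals n"
  define G where "G = G_vertices n"
  define us where "us = sorted_list_of_set U"
  define gs where "gs = sorted_list_of_set G"
  define m where "m = card U"
  define K where "K = card G"
  have finU: "finite U" unfolding U_def by (rule finite_U[OF n])
  have finG: "finite G" unfolding G_def by (rule finite_G)
  have us: "set us = U" "distinct us" "length us = m"
    unfolding us_def m_def using finU by auto
  have gs: "set gs = G" "distinct gs" "length gs = K"
    unfolding gs_def K_def using finG by auto
  have usU: "\<And>i. i < m \<Longrightarrow> us ! i \<in> U" using us nth_mem by metis
  have gsG: "\<And>s. s < K \<Longrightarrow> gs ! s \<in> G" using gs nth_mem by metis
  define c where "c = (\<lambda>i. pos gs (gS n (Xi n (us ! i))))"
  define A where "A = (\<lambda>s t. s \<noteq> t \<and> G_adj n (gs ! s) (gs ! t))"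
  define N where "N = (\<lambda>s. (of_nat (N_weight n (gs ! s)) :: complex))"
  have cG: "gS n (Xi n (us ! i)) \<in> set gs" if "i < m" for i
    using U_class[OF n] usU[OF that] gs(1) unfolding U_def G_def by simp
  have c_lt: "c i < K" and c_gs: "gs ! c i = gS n (Xi n (us ! i))" if "i < m" for i
    using pos_prop[OF cG[OF that]] gs(3) unfolding c_def by auto
  have Xi_c: "Xi n (gs ! c i) = Xi n (us ! i)" if "i < m" for i
    unfolding c_gs[OF that] by (rule Xi_gS[OF Xi_sub])
  interpret B: blk m K c A N
  proof
    show "\<And>i. i < m \<Longrightarrow> c i < K" by (rule c_lt)
    show "\<And>s. \<not> A s s" unfolding A_def by simp
    fix s assume s: "s < K"
    define g where "g = gs ! s"
    have gG: "g \<in> G" using gsG[OF s] g_def by simp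
    have gU: "g \<in> U" using G_sub_U[OF n] gG unfolding U_def G_def by simp
    define i where "i = pos us g"
    have i: "i < m" "us ! i = g" using pos_prop[of g us] gU us unfolding i_def by auto
    have "c i = pos gs (gS n (Xi n g))" unfolding c_def using i by simp
    also have "gS n (Xi n g) = g" using G_gS_Xi gG unfolding G_def by simp
    also have "pos gs g = s" unfolding g_def by (rule pos_nth[OF gs(2)]) (use s gs in simp)
    finally show "\<exists>i<m. c i = s" using i by blast
  qed
  have L: "laplacian U (ess_adj n) = B.Lm"
  proof (rule eq_matI)
    show "dim_row (laplacian U (ess_adj n)) = dim_row B.Lm" "dim_col (laplacian U (ess_adj n)) = dim_col B.Lm"
      using B.Lm_carrier unfolding laplacian_def set_mat_def by (simp_all add: m_def)
    fix i j assume "i < dim_row B.Lm" "j < dim_col B.Lm"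
    then have ij: "i < m" "j < m" unfolding B.Lm_def by simp_all
    have lhs: "laplacian U (ess_adj n) $$ (i,j) =
      (if us ! i = us ! j then of_nat (card {k \<in> U. ess_adj n (us ! i) k})
       else if ess_adj n (us ! i) (us ! j) then -1 else 0)"
      unfolding laplacian_def set_mat_def us_def[symmetric] using ij m_def by simp
    have rhs: "B.Lm $$ (i,j) = (if i = j then N (c i) else if A (c i) (c j) then -1 else 0)"
      unfolding B.Lm_def using ij by simp
    have eqij: "(us ! i = us ! j) = (i = j)" using nth_eq_iff_index_eq[OF us(2)] ij us(3) by simp
    show "laplacian U (ess_adj n) $$ (i,j) = B.Lm $$ (i,j)"
    proof (cases "i = j")
      case True
      have "card {k \<in> U. ess_adj n (us ! i) k} = N_weight n (gS n (Xi n (us ! i)))"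
        unfolding U_def by (rule degree_eq[OF n]) (use usU[OF ij(1)] U_def in simp)
      then show ?thesis using lhs rhs True c_gs[OF ij(1)] unfolding N_def by simp
    next
      case False
      have ne: "Xi n (us ! i) \<noteq> {}" using U_char[OF n] usU[OF ij(1)] unfolding U_def by simp
      have "ess_adj n (us ! i) (us ! j) \<longleftrightarrow> Xi n (us ! i) \<inter> Xi n (us ! j) = {}"
        by (rule adj_iff[OF n]) (use usU ij U_def in simp_all)
      also have "\<dots> \<longleftrightarrow> A (c i) (c j)"
      proof
        assume X: "Xi n (us ! i) \<inter> Xi n (us ! j) = {}"
        have "c i \<noteq> c j"
        proof
          assume "c i = c j"
          then have "Xi n (us ! i) = Xi n (us ! j)" using Xi_c ij by metis
          with X ne show False by simp
        qed
        then show "A (c i) (c j)" unfolding A_def G_adj_def using Xi_c ij X by simp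
      next
        assume "A (c i) (c j)"
        then show "Xi n (us ! i) \<inter> Xi n (us ! j) = {}" unfolding A_def G_adj_def using Xi_c ij by simp
      qed
      finally show ?thesis using lhs rhs False eqij by simp
    qed
  qed
  have sz_eq: "B.sz t = class_size n (gs ! t)" if t: "t < K" for t
  proof -
    have gt: "gs ! t \<in> G" by (rule gsG[OF t])
    have ct: "c i = t \<longleftrightarrow> Xi n (us ! i) = Xi n (gs ! t)" if i: "i < m" for i
    proof
      assume "c i = t" then show "Xi n (us ! i) = Xi n (gs ! t)" using Xi_c[OF i] by simp
    next
      assume X: "Xi n (us ! i) = Xi n (gs ! t)"
      have "gS n (Xi n (us ! i)) = gs ! t" unfolding X using G_gS_Xi gt unfolding G_def by simp
      then show "c i = t" unfolding c_def using pos_nth[OF gs(2)] t gs(3) by simp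
    qed
    have "{i. i < m \<and> c i = t} = {i. i < m \<and> Xi n (us ! i) = Xi n (gs ! t)}" using ct by blast
    moreover have "(\<lambda>i. us ! i) ` {i. i < m \<and> Xi n (us ! i) = Xi n (gs ! t)} = ideal_class n (gs ! t)"
    proof
      show "(\<lambda>i. us ! i) ` {i. i < m \<and> Xi n (us ! i) = Xi n (gs ! t)} \<subseteq> ideal_class n (gs ! t)"
        unfolding ideal_class_def using usU U_def by auto
      show "ideal_class n (gs ! t) \<subseteq> (\<lambda>i. us ! i) ` {i. i < m \<and> Xi n (us ! i) = Xi n (gs ! t)}"
      proof
        fix e assume e: "e \<in> ideal_class n (gs ! t)"
        then have eU: "e \<in> set us" unfolding ideal_class_def using us(1) U_def by simp
        show "e \<in> (\<lambda>i. us ! i) ` {i. i < m \<and> Xi n (us ! i) = Xi n (gs ! t)}"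
          using pos_prop[OF eU] e us(3) unfolding ideal_class_def by (intro image_eqI[where x = "pos us e"]) auto
      qed
    qed
    moreover have "inj_on (\<lambda>i. us ! i) {i. i < m \<and> Xi n (us ! i) = Xi n (gs ! t)}"
      using nth_eq_iff_index_eq[OF us(2)] us(3) by (auto intro: inj_onI)
    ultimately show ?thesis unfolding B.sz_def class_size_def using card_image by metis
  qed
  have W: "weighted_laplacian_G n = B.Wm"
  proof (rule eq_matI)
    show "dim_row (weighted_laplacian_G n) = dim_row B.Wm" "dim_col (weighted_laplacian_G n) = dim_col B.Wm"
      using B.Wm_carrier unfolding weighted_laplacian_G_def set_mat_def by (simp_all add: K_def G_def)
    fix s t assume "s < dim_row B.Wm" "t < dim_col B.Wm"
    then have st: "s < K" "t < K" unfolding B.Wm_def by simp_all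
    have eqst: "(gs ! s = gs ! t) = (s = t)" using nth_eq_iff_index_eq[OF gs(2)] st gs(3) by simp
    have "weighted_laplacian_G n $$ (s,t) =
      (if gs ! s = gs ! t then of_nat (N_weight n (gs ! s))
       else if G_adj n (gs ! s) (gs ! t) then - of_nat (class_size n (gs ! t)) else 0)"
      unfolding weighted_laplacian_G_def set_mat_def G_def[symmetric] gs_def[symmetric] using st K_def by simp
    also have "\<dots> = B.Wm $$ (s,t)"
      unfolding B.Wm_def using st eqst sz_eq[OF st(2)] by (simp add: N_def A_def)
    finally show "weighted_laplacian_G n $$ (s,t) = B.Wm $$ (s,t)" .
  qed
  have S: "(\<Sum>s<K. replicate_mset (B.sz s - 1) (N s)) =
    (\<Sum>I\<in>{I \<in> G_vertices n. class_size n I > 1}.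
        replicate_mset ((\<Prod>p\<in>prime_factors n - Xi n I. multiplicity p n) - 1)
                       (of_nat (N_weight n I)))"
  proof -
    let ?f = "\<lambda>I. replicate_mset (class_size n I - 1) (of_nat (N_weight n I) :: complex)"
    have "(\<Sum>I\<in>{I \<in> G_vertices n. class_size n I > 1}.
        replicate_mset ((\<Prod>p\<in>prime_factors n - Xi n I. multiplicity p n) - 1)
                       (of_nat (N_weight n I))) = (\<Sum>I\<in>{I \<in> G. class_size n I > 1}. ?f I)"
      using class_size_prod[OF n] unfolding G_def by (intro sum.cong) auto
    also have "\<dots> = (\<Sum>I\<in>G. ?f I)"
      by (rule sum.mono_neutral_left) (use finG in auto)
    also have "\<dots> = (\<Sum>I\<in>(\<lambda>s. gs ! s) ` {..<K}. ?f I)"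
    proof -
      have "(\<lambda>s. gs ! s) ` {..<K} = G" using gs by (auto simp: set_conv_nth)
      then show ?thesis by simp
    qed
    also have "\<dots> = (\<Sum>s<K. ?f (gs ! s))"
      by (rule sum.reindex[unfolded comp_def]) (use nth_eq_iff_index_eq[OF gs(2)] gs(3) in \<open>auto intro: inj_onI\<close>)
    also have "\<dots> = (\<Sum>s<K. replicate_mset (B.sz s - 1) (N s))"
      using sz_eq unfolding N_def by (intro sum.cong) auto
    finally show ?thesis by simp
  qed
  show ?thesis
    unfolding spectrum_mset_def U_def[symmetric] L W B.spec_L S[symmetric]
    by (simp add: add.commute)
qed

end
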